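(* Let $\mathcal S$ be a finite nonempty index set. For each $s\in\mathcal S$ let $k^s\in\mathbb N$ and $\theta^s=(\theta^s_j)_{j\in\mathbb N}\in\ell^2(\mathbb N)$ be a real sequence. For $\tau\in\{\pm1\}^{k^s}$ define $\theta^{s,\tau}_j:=\tau_j\theta^s_j$ for $j\in[k^s]$ and $\theta^{s,\tau}_j:=0$ otherwise, and $$g^{s,\tau}:=e_0+\sum_{j\in\mathbb Z:|j|\in[k^s]}\theta^{s,\tau}_{|j|}e_j.$$ Assume $g^{s,\tau}\in\mathcal D$ for all $s\in\mathcal S$ and $\tau\in\{\pm1\}^{k^s}$. Let $\mathbb P_1$ be the probability measure on $[0,1)^n$ with density $(z_1,\dots,z_n)\mapsto\frac1{|\mathcal S|}\sum_{s\in\mathcal S}\frac1{2^{k^s}}\sum_{\tau\in\{\pm1\}^{k^s}}\prod_{j\in[n]}g^{s,\tau}(z_j)$, and let $\mathbb P_0$ be the uniform distribution on $[0,1)^n$. Then $$\chi^2(\mathbb P_1,\mathbb P_0)\le\frac1{|\mathcal S|^2}\sum_{s,t\in\mathcal S}\exp\Big(2n^2\sum_{j\in[k^s\wedge k^t]}(\theta^s_j\theta^t_j)^2\Big)-1.$$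
   Context: $e_j(x):=\exp(-\mathrm i2\pi jx)$ for $x\in[0,1)$, $j\in\mathbb Z$ (so $e_0=\mathbb 1_{[0,1)}$). $\mathcal D$ is the set of real-valued probability densities on $[0,1)$ that are square-integrable. $[k]:=\{1,\dots,k\}$. The $\chi^2$-divergence is $\chi^2(\mathbb P_1,\mathbb P_0):=\mathbb E_{\mathbb P_0}\big[(d\mathbb P_1/d\mathbb P_0)^2\big]-1$. *)

theory Defs
  imports "HOL-Probability.Probability"
begin

definition fe :: "int \<Rightarrow> real \<Rightarrow> complex" where
  "fe j x = exp (- \<i> * complex_of_real (2 * pi * real_of_int j * x))"

definition densD :: "(real \<Rightarrow> complex) set" where
  "densD = {f. (\<forall>x\<in>{0..<1}. f x \<in> \<real> \<and> Re (f x) \<ge> 0)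
              \<and> set_integrable lborel {0..<1::real} (\<lambda>x. Re (f x))
              \<and> (LINT x:{0..<1::real}|lborel. Re (f x)) = 1
              \<and> set_integrable lborel {0..<1::real} (\<lambda>x. (Re (f x))\<^sup>2)}"

definition signs :: "nat \<Rightarrow> (nat \<Rightarrow> real) set" where
  "signs k = PiE {1..k} (\<lambda>_. {-1, 1})"

definition theta_tau :: "(nat \<Rightarrow> real) \<Rightarrow> nat \<Rightarrow> (nat \<Rightarrow> real) \<Rightarrow> nat \<Rightarrow> real" where
  "theta_tau \<theta> k \<tau> j = (if j \<in> {1..k} then \<tau> j * \<theta> j else 0)"

definition gfun :: "(nat \<Rightarrow> real) \<Rightarrow> nat \<Rightarrow> (nat \<Rightarrow> real) \<Rightarrow> real \<Rightarrow> complex" where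
  "gfun \<theta> k \<tau> x = fe 0 x +
     (\<Sum>j\<in>{j::int. nat \<bar>j\<bar> \<in> {1..k}}. complex_of_real (theta_tau \<theta> k \<tau> (nat \<bar>j\<bar>)) * fe j x)"

definition unif_cube :: "nat \<Rightarrow> (nat \<Rightarrow> real) measure" where
  "unif_cube n = PiM {1..n} (\<lambda>_. uniform_measure lborel {0..<1::real})"

definition chi2 :: "'a measure \<Rightarrow> 'a measure \<Rightarrow> ereal" where
  "chi2 P1 P0 = enn2ereal (\<integral>\<^sup>+ x. (RN_deriv P0 P1 x)\<^sup>2 \<partial>P0) - 1"

end

theory Submission
  imports Defs
begin

lemma cosh_bound:
  fixes x :: real
  shows "exp (-x) + exp x \<le> 2 * exp (x\<^sup>2 / 2)"
proof -
  have main: "exp (-y) + exp y \<le> 2 * exp (y\<^sup>2 / 2)" if "y \<ge> 0" for y :: real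
  proof -
    have "-(2*y) * (1/2) + ln (1 + (1/2) * (exp (2*y) - 1)) \<le> (2*y)\<^sup>2 / 8"
      by (rule Hoeffdings_lemma_aux) (use that in auto)
    hence "ln ((1 + exp (2*y)) / 2) \<le> y + y\<^sup>2 / 2"
      by (simp add: power2_eq_square field_simps)
    hence "(1 + exp (2*y)) / 2 \<le> exp (y + y\<^sup>2 / 2)"
      by (metis add_pos_nonneg exp_gt_zero exp_le_cancel_iff exp_ln_iff half_gt_zero_iff less_eq_real_def one_add_one zero_less_one)
    hence "(1 + exp (2*y)) / 2 * exp (-y) \<le> exp (y + y\<^sup>2 / 2) * exp (-y)"
      by (intro mult_right_mono) auto
    moreover have "(1 + exp (2*y)) / 2 * exp (-y) = (exp (-y) + exp y) / 2"
      by (simp add: field_simps flip: exp_add)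
    moreover have "exp (y + y\<^sup>2 / 2) * exp (-y) = exp (y\<^sup>2 / 2)"
      by (simp flip: exp_add)
    ultimately show ?thesis by simp
  qed
  show ?thesis
  proof (cases "x \<ge> 0")
    case True then show ?thesis using main by blast
  next
    case False then show ?thesis using main[of "-x"] by simp
  qed
qed

lemma card_signs: "card (signs K) = 2 ^ K"
  unfolding signs_def by (simp add: card_PiE numeral_2_eq_2)

lemma finite_signs: "finite (signs K)"
  unfolding signs_def by (simp add: finite_PiE)

lemma rad_bound:
  fixes N :: real and c :: "nat \<Rightarrow> real"
  shows "(\<Sum>\<tau>\<in>signs K. exp (N * (\<Sum>m\<in>{1..K}. \<tau> m * c m)))
          \<le> 2 ^ K * exp (N\<^sup>2 / 2 * (\<Sum>m\<in>{1..K}. (c m)\<^sup>2))"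
proof -
  have "(\<Sum>\<tau>\<in>signs K. exp (N * (\<Sum>m\<in>{1..K}. \<tau> m * c m)))
      = (\<Sum>\<tau>\<in>signs K. \<Prod>m\<in>{1..K}. exp (N * c m * \<tau> m))"
    by (simp add: sum_distrib_left exp_sum mult_ac)
  also have "\<dots> = (\<Prod>m\<in>{1..K}. \<Sum>y\<in>{-1,1}. exp (N * c m * y))"
    unfolding signs_def by (rule prod_sum_PiE[symmetric]) auto
  also have "\<dots> = (\<Prod>m\<in>{1..K}. exp (-(N * c m)) + exp (N * c m))"
    by simp
  also have "\<dots> \<le> (\<Prod>m\<in>{1..K}. 2 * exp ((N * c m)\<^sup>2 / 2))"
    by (intro prod_mono conjI cosh_bound) (auto intro: add_nonneg_nonneg)
  also have "\<dots> = 2 ^ K * exp (N\<^sup>2 / 2 * (\<Sum>m\<in>{1..K}. (c m)\<^sup>2))"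
    by (simp add: prod.distrib exp_sum sum_distrib_left power_mult_distrib mult_ac)
  finally show ?thesis .
qed

lemma pow_le_exp:
  fixes x :: real
  assumes "0 \<le> 1 + x"
  shows "(1 + x) ^ n \<le> exp (real n * x)"
proof -
  have "(1 + x) ^ n \<le> exp x ^ n"
    by (intro power_mono assms) (simp add: exp_ge_add_one_self)
  also have "\<dots> = exp (real n * x)" by (simp add: exp_of_nat_mult)
  finally show ?thesis .
qed

lemma signs_sq: "\<tau> \<in> signs L \<Longrightarrow> m \<in> {1..L} \<Longrightarrow> (\<tau> m)\<^sup>2 = 1"
  unfolding signs_def by (auto simp: PiE_def Pi_def)

lemma avg_bound:
  fixes a :: "nat \<Rightarrow> real" and K L n :: nat
  assumes nn: "\<And>\<tau> \<tau>'. \<tau> \<in> signs K \<Longrightarrow> \<tau>' \<in> signs L \<Longrightarrow>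
                  0 \<le> 1 + 2 * (\<Sum>m\<in>{1..min K L}. \<tau> m * \<tau>' m * a m)"
  shows "(1 / 2 ^ K) * (1 / 2 ^ L) * (\<Sum>\<tau>\<in>signs K. \<Sum>\<tau>'\<in>signs L.
            (1 + 2 * (\<Sum>m\<in>{1..min K L}. \<tau> m * \<tau>' m * a m)) ^ n)
         \<le> exp (2 * (real n)\<^sup>2 * (\<Sum>m\<in>{1..min K L}. (a m)\<^sup>2))"
proof -
  define E where "E = exp (2 * (real n)\<^sup>2 * (\<Sum>m\<in>{1..min K L}. (a m)\<^sup>2))"
  have inner: "(\<Sum>\<tau>\<in>signs K. (1 + 2 * (\<Sum>m\<in>{1..min K L}. \<tau> m * \<tau>' m * a m)) ^ n) \<le> 2 ^ K * E"
    if t': "\<tau>' \<in> signs L" for \<tau>'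
  proof -
    define c where "c m = (if m \<le> L then \<tau>' m * a m else 0)" for m
    have fin: "{x \<in> {1..K}. x \<le> L} = {1..min K L}" by auto
    have e1: "(\<Sum>m\<in>{1..min K L}. \<tau> m * \<tau>' m * a m) = (\<Sum>m\<in>{1..K}. \<tau> m * c m)" for \<tau> :: "nat \<Rightarrow> real"
    proof -
      have "(\<Sum>m\<in>{1..K}. \<tau> m * c m) = (\<Sum>m\<in>{1..K}. if m \<le> L then \<tau> m * \<tau>' m * a m else 0)"
        by (intro sum.cong) (auto simp: c_def)
      also have "\<dots> = (\<Sum>m\<in>{x \<in> {1..K}. x \<le> L}. \<tau> m * \<tau>' m * a m)"
        by (rule sum.inter_filter[symmetric]) simp
      also have "\<dots> = (\<Sum>m\<in>{1..min K L}. \<tau> m * \<tau>' m * a m)" by (simp only: fin)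
      finally show ?thesis by simp
    qed
    have e2: "(\<Sum>m\<in>{1..K}. (c m)\<^sup>2) = (\<Sum>m\<in>{1..min K L}. (a m)\<^sup>2)"
    proof -
      have "(\<Sum>m\<in>{1..K}. (c m)\<^sup>2) = (\<Sum>m\<in>{1..K}. if m \<le> L then (a m)\<^sup>2 else 0)"
        by (intro sum.cong) (auto simp: c_def power_mult_distrib signs_sq[OF t'])
      also have "\<dots> = (\<Sum>m\<in>{x \<in> {1..K}. x \<le> L}. (a m)\<^sup>2)"
        by (rule sum.inter_filter[symmetric]) simp
      also have "\<dots> = (\<Sum>m\<in>{1..min K L}. (a m)\<^sup>2)" by (simp only: fin)
      finally show ?thesis by simp
    qed
    have "(\<Sum>\<tau>\<in>signs K. (1 + 2 * (\<Sum>m\<in>{1..min K L}. \<tau> m * \<tau>' m * a m)) ^ n)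
        \<le> (\<Sum>\<tau>\<in>signs K. exp (real n * (2 * (\<Sum>m\<in>{1..min K L}. \<tau> m * \<tau>' m * a m))))"
      by (intro sum_mono pow_le_exp nn t')
    also have "\<dots> = (\<Sum>\<tau>\<in>signs K. exp ((2 * real n) * (\<Sum>m\<in>{1..K}. \<tau> m * c m)))"
      by (simp only: e1) (simp add: mult_ac)
    also have "\<dots> \<le> 2 ^ K * exp ((2 * real n)\<^sup>2 / 2 * (\<Sum>m\<in>{1..K}. (c m)\<^sup>2))"
      by (rule rad_bound)
    also have "\<dots> = 2 ^ K * E"
      by (simp only: e2) (simp add: E_def power_mult_distrib)
    finally show ?thesis .
  qed
  have "(\<Sum>\<tau>\<in>signs K. \<Sum>\<tau>'\<in>signs L. (1 + 2 * (\<Sum>m\<in>{1..min K L}. \<tau> m * \<tau>' m * a m)) ^ n)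
      = (\<Sum>\<tau>'\<in>signs L. \<Sum>\<tau>\<in>signs K. (1 + 2 * (\<Sum>m\<in>{1..min K L}. \<tau> m * \<tau>' m * a m)) ^ n)"
    by (rule sum.swap)
  also have "\<dots> \<le> (\<Sum>\<tau>'\<in>signs L. 2 ^ K * E)"
    by (intro sum_mono inner)
  also have "\<dots> = 2 ^ L * 2 ^ K * E"
    by (simp add: card_signs)
  finally show ?thesis
    by (simp add: E_def field_simps)
qed



lemma Re_fe: "Re (fe j x) = cos (2 * pi * real_of_int j * x)"
  unfolding fe_def by (simp add: Re_exp)

lemma Re_gfun:
  "Re (gfun \<theta> k \<tau> x) = 1 + 2 * (\<Sum>m\<in>{1..k}. theta_tau \<theta> k \<tau> m * cos (2 * pi * real m * x))"
proof -
  define \<phi> where "\<phi> j = theta_tau \<theta> k \<tau> (nat \<bar>j\<bar>) * cos (2 * pi * real_of_int j * x)" for j :: int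
  have set: "{j::int. nat \<bar>j\<bar> \<in> {1..k}} = int ` {1..k} \<union> (\<lambda>m. - int m) ` {1..k}"
  proof (intro equalityI subsetI)
    fix j :: int assume "j \<in> {j::int. nat \<bar>j\<bar> \<in> {1..k}}"
    then show "j \<in> int ` {1..k} \<union> (\<lambda>m. - int m) ` {1..k}"
      by (cases "j \<ge> 0") (auto simp: image_iff intro!: bexI[of _ "nat \<bar>j\<bar>"])
  qed auto
  have "Re (gfun \<theta> k \<tau> x) = 1 + (\<Sum>j\<in>{j::int. nat \<bar>j\<bar> \<in> {1..k}}. \<phi> j)"
    unfolding gfun_def \<phi>_def by (simp add: Re_fe)
  also have "(\<Sum>j\<in>{j::int. nat \<bar>j\<bar> \<in> {1..k}}. \<phi> j)
      = (\<Sum>j\<in>int ` {1..k}. \<phi> j) + (\<Sum>j\<in>(\<lambda>m. - int m) ` {1..k}. \<phi> j)"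
    unfolding set by (rule sum.union_disjoint) auto
  also have "(\<Sum>j\<in>int ` {1..k}. \<phi> j) = (\<Sum>m\<in>{1..k}. theta_tau \<theta> k \<tau> m * cos (2 * pi * real m * x))"
    by (subst sum.reindex) (auto simp: inj_on_def \<phi>_def)
  also have "(\<Sum>j\<in>(\<lambda>m. - int m) ` {1..k}. \<phi> j) = (\<Sum>m\<in>{1..k}. theta_tau \<theta> k \<tau> m * cos (2 * pi * real m * x))"
    by (subst sum.reindex) (auto simp: inj_on_def \<phi>_def)
  finally show ?thesis by simp
qed

lemma cont_Re_gfun: "continuous_on UNIV (\<lambda>x. Re (gfun \<theta> k \<tau> x))"
  unfolding Re_gfun by (intro continuous_intros)



abbreviation U :: "real measure" where "U \<equiv> uniform_measure lborel {0..<1::real}"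

lemma prob_U: "prob_space U"
  by (rule prob_space_uniform_measure) auto

lemma U_density: "U = density lborel (\<lambda>x. ennreal (indicator {0..<1::real} x))"
  unfolding uniform_measure_def by (intro density_cong) (auto simp: indicator_def)

lemma intU:
  fixes f :: "real \<Rightarrow> real"
  assumes f: "continuous_on UNIV f"
  shows "integrable U f" "integral\<^sup>L U f = integral\<^sup>L lborel (\<lambda>x. indicator {0..1} x *\<^sub>R f x)"
proof -
  have fm[measurable]: "f \<in> borel_measurable borel" using f by (rule borel_measurable_continuous_onI)
  have si: "set_integrable lborel {0..1} f"
    by (rule borel_integrable_atLeastAtMost') (rule continuous_on_subset[OF f], auto)
  have si': "set_integrable lborel {0..<1} f"
    by (rule set_integrable_subset[OF si]) auto
  show "integrable U f"
    unfolding U_density using si'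
    by (subst integrable_density) (auto simp: set_integrable_def)
  have "integral\<^sup>L U f = integral\<^sup>L lborel (\<lambda>x. indicator {0..<1} x *\<^sub>R f x)"
    unfolding U_density by (subst integral_density) auto
  also have "\<dots> = integral\<^sup>L lborel (\<lambda>x. indicator {0..1} x *\<^sub>R f x)"
    by (intro integral_cong_AE) (auto intro!: eventually_mono[OF AE_lborel_singleton[of 1]] simp: indicator_def)
  finally show "integral\<^sup>L U f = integral\<^sup>L lborel (\<lambda>x. indicator {0..1} x *\<^sub>R f x)" .
qed

lemma int_cos:
  fixes p :: int
  shows "integral\<^sup>L U (\<lambda>x. cos (2 * pi * real_of_int p * x)) = (if p = 0 then 1 else 0)"
proof (cases "p = 0")
  case True
  then show ?thesis using prob_space.prob_space[OF prob_U] by (simp add: measure_def)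
next
  case False
  have "integral\<^sup>L U (\<lambda>x. cos (2 * pi * real_of_int p * x))
      = integral\<^sup>L lborel (\<lambda>x. indicator {0..1} x *\<^sub>R cos (2 * pi * real_of_int p * x))"
    by (rule intU(2)) (intro continuous_intros)
  also have "\<dots> = sin (2 * pi * real_of_int p * 1) / (2 * pi * real_of_int p)
                 - sin (2 * pi * real_of_int p * 0) / (2 * pi * real_of_int p)"
    using False
    by (intro integral_FTC_atLeastAtMost)
       (auto intro!: derivative_eq_intros continuous_intros simp: has_real_derivative_iff_has_vector_derivative[symmetric])
  also have "\<dots> = 0" by simp
  finally show ?thesis using False by simp
qed

lemma int_cc:
  fixes m l :: nat
  assumes "m \<ge> 1" "l \<ge> 1"
  shows "integral\<^sup>L U (\<lambda>x. cos (2 * pi * real m * x) * cos (2 * pi * real l * x)) = (if m = l then 1/2 else 0)"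
proof -
  have eq: "cos (2 * pi * real m * x) * cos (2 * pi * real l * x)
      = cos (2 * pi * real_of_int (int m - int l) * x) / 2 + cos (2 * pi * real_of_int (int m + int l) * x) / 2" for x
  proof -
    have e1: "2 * pi * real_of_int (int m - int l) * x = 2 * pi * real m * x - 2 * pi * real l * x"
      by (simp add: algebra_simps)
    have e2: "2 * pi * real_of_int (int m + int l) * x = 2 * pi * real m * x + 2 * pi * real l * x"
      by (simp add: algebra_simps)
    show ?thesis by (simp only: e1 e2 cos_times_cos) simp
  qed
  have "integral\<^sup>L U (\<lambda>x. cos (2 * pi * real m * x) * cos (2 * pi * real l * x))
     = integral\<^sup>L U (\<lambda>x. cos (2 * pi * real_of_int (int m - int l) * x) / 2) + integral\<^sup>L U (\<lambda>x. cos (2 * pi * real_of_int (int m + int l) * x) / 2)"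
    unfolding eq by (intro Bochner_Integration.integral_add intU(1) continuous_intros) auto
  also have "\<dots> = (if int m - int l = 0 then 1 else 0) / 2 + (if int m + int l = 0 then 1 else 0) / 2"
    by (simp only: integral_divide_zero int_cos)
  also have "\<dots> = (if m = l then 1/2 else 0)"
    using assms by simp
  finally show ?thesis .
qed

lemma int_c:
  fixes m :: nat
  assumes "m \<ge> 1"
  shows "integral\<^sup>L U (\<lambda>x. cos (2 * pi * real m * x)) = 0"
  using int_cos[of "int m"] assms by simp

lemma int_prod:
  fixes a b :: "nat \<Rightarrow> real"
  shows "integral\<^sup>L U (\<lambda>x. (1 + 2 * (\<Sum>m\<in>{1..K}. a m * cos (2 * pi * real m * x)))
                           * (1 + 2 * (\<Sum>l\<in>{1..L}. b l * cos (2 * pi * real l * x))))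
         = 1 + 2 * (\<Sum>m\<in>{1..min K L}. a m * b m)"
proof -
  define A where "A x = (\<Sum>m\<in>{1..K}. a m * cos (2 * pi * real m * x))" for x
  define B where "B x = (\<Sum>l\<in>{1..L}. b l * cos (2 * pi * real l * x))" for x
  define C where "C x = (\<Sum>m\<in>{1..K}. \<Sum>l\<in>{1..L}. a m * b l * (cos (2 * pi * real m * x) * cos (2 * pi * real l * x)))" for x
  have AB: "A x * B x = C x" for x
    unfolding A_def B_def C_def by (simp add: sum_product mult_ac)
  have iA: "integrable U A" unfolding A_def by (intro intU(1) continuous_intros)
  have iB: "integrable U B" unfolding B_def by (intro intU(1) continuous_intros)
  have iC: "integrable U C" unfolding C_def by (intro intU(1) continuous_intros)
  have i1: "integrable U (\<lambda>x. 1::real)" by (intro intU(1) continuous_intros)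
  have IA: "integral\<^sup>L U A = 0"
  proof -
    have "integral\<^sup>L U A = (\<Sum>m\<in>{1..K}. integral\<^sup>L U (\<lambda>x. a m * cos (2 * pi * real m * x)))"
      unfolding A_def by (rule Bochner_Integration.integral_sum) (intro intU(1) continuous_intros)
    then show ?thesis by (simp add: int_c)
  qed
  have IB: "integral\<^sup>L U B = 0"
  proof -
    have "integral\<^sup>L U B = (\<Sum>m\<in>{1..L}. integral\<^sup>L U (\<lambda>x. b m * cos (2 * pi * real m * x)))"
      unfolding B_def by (rule Bochner_Integration.integral_sum) (intro intU(1) continuous_intros)
    then show ?thesis by (simp add: int_c)
  qed
  have IC: "integral\<^sup>L U C = (\<Sum>m\<in>{1..K}. \<Sum>l\<in>{1..L}. a m * b l * (if m = l then 1/2 else 0))"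
  proof -
    have "integral\<^sup>L U C = (\<Sum>m\<in>{1..K}. integral\<^sup>L U (\<lambda>x. \<Sum>l\<in>{1..L}. a m * b l * (cos (2 * pi * real m * x) * cos (2 * pi * real l * x))))"
      unfolding C_def by (rule Bochner_Integration.integral_sum) (intro intU(1) continuous_intros)
    also have "\<dots> = (\<Sum>m\<in>{1..K}. \<Sum>l\<in>{1..L}. integral\<^sup>L U (\<lambda>x. a m * b l * (cos (2 * pi * real m * x) * cos (2 * pi * real l * x))))"
      by (intro sum.cong refl Bochner_Integration.integral_sum intU(1) continuous_intros)
    also have "\<dots> = (\<Sum>m\<in>{1..K}. \<Sum>l\<in>{1..L}. a m * b l * (if m = l then 1/2 else 0))"
      by (intro sum.cong refl) (simp add: int_cc)
    finally show ?thesis .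
  qed
  have fin: "{x \<in> {1..K}. x \<le> L} = {1..min K L}" by auto
  have "(\<Sum>m\<in>{1..K}. \<Sum>l\<in>{1..L}. a m * b l * (if m = l then 1/2 else 0))
      = (\<Sum>m\<in>{1..K}. if m \<le> L then a m * b m / 2 else 0)"
    by (intro sum.cong refl) (auto simp: if_distrib[of "\<lambda>x. _ * x"] sum.delta cong: if_cong)
  also have "\<dots> = (\<Sum>m\<in>{x \<in> {1..K}. x \<le> L}. a m * b m / 2)"
    by (rule sum.inter_filter[symmetric]) simp
  also have "\<dots> = (\<Sum>m\<in>{1..min K L}. a m * b m / 2)" by (simp only: fin)
  finally have IC': "integral\<^sup>L U C = (\<Sum>m\<in>{1..min K L}. a m * b m) / 2"
    by (simp add: IC sum_divide_distrib)
  have "(\<lambda>x. (1 + 2 * A x) * (1 + 2 * B x)) = (\<lambda>x. 1 + (2 * A x + (2 * B x + 4 * C x)))"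
    by (auto simp: AB[symmetric] algebra_simps)
  then have "integral\<^sup>L U (\<lambda>x. (1 + 2 * A x) * (1 + 2 * B x))
      = integral\<^sup>L U (\<lambda>x. 1::real) + (2 * integral\<^sup>L U A + (2 * integral\<^sup>L U B + 4 * integral\<^sup>L U C))"
    using iA iB iC i1 by (simp add: Bochner_Integration.integral_add)
  also have "\<dots> = 1 + 2 * (\<Sum>m\<in>{1..min K L}. a m * b m)"
    using prob_space.prob_space[OF prob_U] by (simp add: IA IB IC' measure_def)
  finally show ?thesis unfolding A_def B_def .
qed

lemma meas_G[measurable]: "(\<lambda>x. Re (gfun \<theta> k \<tau> x)) \<in> borel_measurable borel"
  by (rule borel_measurable_continuous_onI) (rule cont_Re_gfun)

lemma int_H:
  assumes "\<tau> \<in> signs K" "\<tau>' \<in> signs L"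
  shows "integral\<^sup>L U (\<lambda>x. Re (gfun \<theta> K \<tau> x) * Re (gfun \<theta>' L \<tau>' x))
       = 1 + 2 * (\<Sum>m\<in>{1..min K L}. \<tau> m * \<tau>' m * (\<theta> m * \<theta>' m))"
proof -
  have "integral\<^sup>L U (\<lambda>x. Re (gfun \<theta> K \<tau> x) * Re (gfun \<theta>' L \<tau>' x))
      = 1 + 2 * (\<Sum>m\<in>{1..min K L}. theta_tau \<theta> K \<tau> m * theta_tau \<theta>' L \<tau>' m)"
    unfolding Re_gfun by (rule int_prod)
  also have "(\<Sum>m\<in>{1..min K L}. theta_tau \<theta> K \<tau> m * theta_tau \<theta>' L \<tau>' m)
      = (\<Sum>m\<in>{1..min K L}. \<tau> m * \<tau>' m * (\<theta> m * \<theta>' m))"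
    by (intro sum.cong refl) (auto simp: theta_tau_def)
  finally show ?thesis .
qed

lemma int_H_nonneg:
  assumes "gfun \<theta> K \<tau> \<in> densD" "gfun \<theta>' L \<tau>' \<in> densD"
  shows "0 \<le> integral\<^sup>L U (\<lambda>x. Re (gfun \<theta> K \<tau> x) * Re (gfun \<theta>' L \<tau>' x))"
proof (rule integral_nonneg_AE, rule AE_uniform_measureI)
  show "AE x in lborel. x \<in> {0..<1} \<longrightarrow> 0 \<le> Re (gfun \<theta> K \<tau> x) * Re (gfun \<theta>' L \<tau>' x)"
    using assms by (auto simp: densD_def)
qed auto

theorem lemmaC2:
  fixes S :: "'s set" and k :: "'s \<Rightarrow> nat" and \<theta> :: "'s \<Rightarrow> nat \<Rightarrow> real" and n :: nat
  assumes "finite S" and "S \<noteq> {}"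
    and "\<And>s. s \<in> S \<Longrightarrow> summable (\<lambda>j. (\<theta> s j)\<^sup>2)"
    and "\<And>s \<tau>. s \<in> S \<Longrightarrow> \<tau> \<in> signs (k s) \<Longrightarrow> gfun (\<theta> s) (k s) \<tau> \<in> densD"
  shows "chi2
           (density (unif_cube n) (\<lambda>z. ennreal
              ((1 / real (card S)) * (\<Sum>s\<in>S. (1 / 2 ^ k s) *
                 (\<Sum>\<tau>\<in>signs (k s). \<Prod>j\<in>{1..n}. Re (gfun (\<theta> s) (k s) \<tau> (z j)))))))
           (unif_cube n)
         \<le> ereal ((1 / (real (card S))\<^sup>2) *
              (\<Sum>s\<in>S. \<Sum>t\<in>S. exp (2 * (real n)\<^sup>2 *
                  (\<Sum>j\<in>{1..min (k s) (k t)}. (\<theta> s j * \<theta> t j)\<^sup>2))) - 1)"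
proof -
  define G where "G s \<tau> x = Re (gfun (\<theta> s) (k s) \<tau> x)" for s \<tau> x
  define F where "F z = (1 / real (card S)) * (\<Sum>s\<in>S. (1 / 2 ^ k s) *
                 (\<Sum>\<tau>\<in>signs (k s). \<Prod>j\<in>{1..n}. G s \<tau> (z j)))" for z :: "nat \<Rightarrow> real"
  define P0 where "P0 = unif_cube n"
  define IH where "IH s \<tau> t \<tau>' = integral\<^sup>L U (\<lambda>x. G s \<tau> x * G t \<tau>' x)" for s \<tau> t \<tau>'
  define B where "B = (1 / (real (card S))\<^sup>2) *
              (\<Sum>s\<in>S. \<Sum>t\<in>S. exp (2 * (real n)\<^sup>2 *
                  (\<Sum>j\<in>{1..min (k s) (k t)}. (\<theta> s j * \<theta> t j)\<^sup>2)))"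
  interpret PP: product_prob_space "\<lambda>_::nat. U" "{1..n}"
    by (simp add: product_prob_space_def product_sigma_finite_def prob_U
        prob_space_imp_sigma_finite product_prob_space_axioms_def)
  interpret P0: prob_space P0
    unfolding P0_def unif_cube_def by (rule prob_space_PiM) (rule prob_U)
  have measG[measurable]: "G s \<tau> \<in> borel_measurable borel" for s \<tau>
    unfolding G_def by measurable
  have measF[measurable]: "F \<in> borel_measurable P0"
    unfolding F_def P0_def unif_cube_def by measurable
  have iH: "integrable U (\<lambda>x. G s \<tau> x * G t \<tau>' x)" for s \<tau> t \<tau>'
    unfolding G_def by (intro intU(1) continuous_intros cont_Re_gfun)
  have iprod: "integrable P0 (\<lambda>z. \<Prod>j\<in>{1..n}. G s \<tau> (z j) * G t \<tau>' (z j))" for s \<tau> t \<tau>'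
    unfolding P0_def unif_cube_def
    by (rule PP.product_integrable_prod[where f="\<lambda>_ x. G s \<tau> x * G t \<tau>' x", simplified]) (auto intro!: iH)
  have Iprod: "integral\<^sup>L P0 (\<lambda>z. \<Prod>j\<in>{1..n}. G s \<tau> (z j) * G t \<tau>' (z j)) = (IH s \<tau> t \<tau>') ^ n" for s \<tau> t \<tau>'
    unfolding P0_def unif_cube_def IH_def
    by (subst PP.product_integral_prod[where f="\<lambda>_ x. G s \<tau> x * G t \<tau>' x", simplified]) (simp_all add: iH)
  define T where "T s t z = (1 / 2 ^ k s) * (1 / 2 ^ k t) *
      (\<Sum>\<tau>\<in>signs (k s). \<Sum>\<tau>'\<in>signs (k t). \<Prod>j\<in>{1..n}. G s \<tau> (z j) * G t \<tau>' (z j))" for s t z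
  have FF: "(F z)\<^sup>2 = (1 / real (card S))\<^sup>2 * (\<Sum>s\<in>S. \<Sum>t\<in>S. T s t z)" for z
  proof -
    define a where "a s = (1 / 2 ^ k s) * (\<Sum>\<tau>\<in>signs (k s). \<Prod>j\<in>{1..n}. G s \<tau> (z j))" for s
    have Fa: "F z = (1 / real (card S)) * (\<Sum>s\<in>S. a s)" unfolding F_def a_def ..
    have aa: "a s * a t = T s t z" for s t
    proof -
      have "a s * a t = (1 / 2 ^ k s) * (1 / 2 ^ k t) * ((\<Sum>\<tau>\<in>signs (k s). \<Prod>j\<in>{1..n}. G s \<tau> (z j)) * (\<Sum>\<tau>'\<in>signs (k t). \<Prod>j\<in>{1..n}. G t \<tau>' (z j)))"
        unfolding a_def by (simp add: mult_ac)
      also have "(\<Sum>\<tau>\<in>signs (k s). \<Prod>j\<in>{1..n}. G s \<tau> (z j)) * (\<Sum>\<tau>'\<in>signs (k t). \<Prod>j\<in>{1..n}. G t \<tau>' (z j))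
          = (\<Sum>\<tau>\<in>signs (k s). \<Sum>\<tau>'\<in>signs (k t). (\<Prod>j\<in>{1..n}. G s \<tau> (z j)) * (\<Prod>j\<in>{1..n}. G t \<tau>' (z j)))"
        by (rule sum_product)
      also have "\<dots> = (\<Sum>\<tau>\<in>signs (k s). \<Sum>\<tau>'\<in>signs (k t). \<Prod>j\<in>{1..n}. G s \<tau> (z j) * G t \<tau>' (z j))"
        by (simp only: prod.distrib)
      finally show ?thesis unfolding T_def .
    qed
    have "(F z)\<^sup>2 = (1 / real (card S))\<^sup>2 * ((\<Sum>s\<in>S. a s) * (\<Sum>t\<in>S. a t))"
      unfolding Fa by (simp add: power2_eq_square)
    also have "(\<Sum>s\<in>S. a s) * (\<Sum>t\<in>S. a t) = (\<Sum>s\<in>S. \<Sum>t\<in>S. a s * a t)"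
      by (rule sum_product)
    finally show ?thesis by (simp only: aa)
  qed
  have iT: "integrable P0 (T s t)" for s t
    unfolding T_def by (intro Bochner_Integration.integrable_sum integrable_mult_right iprod)
  have IT: "integral\<^sup>L P0 (T s t) = (1 / 2 ^ k s) * (1 / 2 ^ k t) *
      (\<Sum>\<tau>\<in>signs (k s). \<Sum>\<tau>'\<in>signs (k t). (IH s \<tau> t \<tau>') ^ n)" for s t
  proof -
    have "integral\<^sup>L P0 (\<lambda>z. \<Sum>\<tau>\<in>signs (k s). \<Sum>\<tau>'\<in>signs (k t). \<Prod>j\<in>{1..n}. G s \<tau> (z j) * G t \<tau>' (z j))
        = (\<Sum>\<tau>\<in>signs (k s). integral\<^sup>L P0 (\<lambda>z. \<Sum>\<tau>'\<in>signs (k t). \<Prod>j\<in>{1..n}. G s \<tau> (z j) * G t \<tau>' (z j)))"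
      by (intro Bochner_Integration.integral_sum Bochner_Integration.integrable_sum iprod)
    also have "\<dots> = (\<Sum>\<tau>\<in>signs (k s). \<Sum>\<tau>'\<in>signs (k t). integral\<^sup>L P0 (\<lambda>z. \<Prod>j\<in>{1..n}. G s \<tau> (z j) * G t \<tau>' (z j)))"
      by (intro sum.cong refl Bochner_Integration.integral_sum iprod)
    finally show ?thesis unfolding T_def by (simp only: integral_mult_right_zero Iprod)
  qed
  have iF2: "integrable P0 (\<lambda>z. (F z)\<^sup>2)"
    unfolding FF by (intro Bochner_Integration.integrable_sum integrable_mult_right iT)
  have IF2: "integral\<^sup>L P0 (\<lambda>z. (F z)\<^sup>2) = (1 / real (card S))\<^sup>2 * (\<Sum>s\<in>S. \<Sum>t\<in>S. integral\<^sup>L P0 (T s t))"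
  proof -
    have "integral\<^sup>L P0 (\<lambda>z. \<Sum>s\<in>S. \<Sum>t\<in>S. T s t z) = (\<Sum>s\<in>S. integral\<^sup>L P0 (\<lambda>z. \<Sum>t\<in>S. T s t z))"
      by (intro Bochner_Integration.integral_sum Bochner_Integration.integrable_sum iT)
    also have "\<dots> = (\<Sum>s\<in>S. \<Sum>t\<in>S. integral\<^sup>L P0 (T s t))"
      by (intro sum.cong refl Bochner_Integration.integral_sum iT)
    finally show ?thesis unfolding FF by (simp only: integral_mult_right_zero)
  qed
  have bound: "integral\<^sup>L P0 (T s t) \<le> exp (2 * (real n)\<^sup>2 *
                  (\<Sum>j\<in>{1..min (k s) (k t)}. (\<theta> s j * \<theta> t j)\<^sup>2))" if st: "s \<in> S" "t \<in> S" for s t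
  proof -
    have eq: "IH s \<tau> t \<tau>' = 1 + 2 * (\<Sum>m\<in>{1..min (k s) (k t)}. \<tau> m * \<tau>' m * (\<theta> s m * \<theta> t m))"
      if "\<tau> \<in> signs (k s)" "\<tau>' \<in> signs (k t)" for \<tau> \<tau>'
      unfolding IH_def G_def by (rule int_H) (use that in auto)
    have nn: "0 \<le> IH s \<tau> t \<tau>'" if "\<tau> \<in> signs (k s)" "\<tau>' \<in> signs (k t)" for \<tau> \<tau>'
      unfolding IH_def G_def by (rule int_H_nonneg) (use that st assms(4) in auto)
    have "integral\<^sup>L P0 (T s t) = (1 / 2 ^ k s) * (1 / 2 ^ k t) *
      (\<Sum>\<tau>\<in>signs (k s). \<Sum>\<tau>'\<in>signs (k t).
         (1 + 2 * (\<Sum>m\<in>{1..min (k s) (k t)}. \<tau> m * \<tau>' m * (\<theta> s m * \<theta> t m))) ^ n)"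
      unfolding IT by (intro arg_cong2[where f="(*)"] refl sum.cong) (simp_all add: eq)
    also have "\<dots> \<le> exp (2 * (real n)\<^sup>2 * (\<Sum>m\<in>{1..min (k s) (k t)}. (\<theta> s m * \<theta> t m)\<^sup>2))"
      by (rule avg_bound) (use nn eq in auto)
    finally show ?thesis .
  qed
  have IF2_le: "integral\<^sup>L P0 (\<lambda>z. (F z)\<^sup>2) \<le> B"
    unfolding IF2 B_def power_one_over
    by (intro mult_left_mono sum_mono bound) auto
  have RN: "AE x in P0. ennreal (F x) = RN_deriv P0 (density P0 (\<lambda>z. ennreal (F z))) x"
    by (rule P0.RN_deriv_unique) auto
  have "(\<integral>\<^sup>+ x. (RN_deriv P0 (density P0 (\<lambda>z. ennreal (F z))) x)\<^sup>2 \<partial>P0)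
      = (\<integral>\<^sup>+ x. (ennreal (F x))\<^sup>2 \<partial>P0)"
    by (rule nn_integral_cong_AE) (use RN in auto)
  also have "\<dots> \<le> (\<integral>\<^sup>+ x. ennreal ((F x)\<^sup>2) \<partial>P0)"
  proof (rule nn_integral_mono)
    fix x show "(ennreal (F x))\<^sup>2 \<le> ennreal ((F x)\<^sup>2)"
      by (cases "F x \<ge> 0") (auto simp: ennreal_power ennreal_neg)
  qed
  also have "\<dots> = ennreal (integral\<^sup>L P0 (\<lambda>z. (F z)\<^sup>2))"
    by (rule nn_integral_eq_integral) (use iF2 in auto)
  also have "\<dots> \<le> ennreal B"
    by (rule ennreal_leI) (rule IF2_le)
  finally have le: "(\<integral>\<^sup>+ x. (RN_deriv P0 (density P0 (\<lambda>z. ennreal (F z))) x)\<^sup>2 \<partial>P0) \<le> ennreal B" .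
  have B0: "0 \<le> B"
    unfolding B_def by (intro mult_nonneg_nonneg sum_nonneg) auto
  have "chi2 (density P0 (\<lambda>z. ennreal (F z))) P0 \<le> ereal B - 1"
    unfolding chi2_def
  proof (rule ereal_minus_mono)
    show "enn2ereal (\<integral>\<^sup>+ x. (RN_deriv P0 (density P0 (\<lambda>z. ennreal (F z))) x)\<^sup>2 \<partial>P0) \<le> ereal B"
      using le B0 by (metis enn2ereal_ennreal less_eq_ennreal.rep_eq)
  qed simp
  moreover have "ereal B - 1 = ereal (B - 1)"
    by (metis ereal_minus(1) one_ereal_def)
  ultimately have "chi2 (density P0 (\<lambda>z. ennreal (F z))) P0 \<le> ereal (B - 1)" by simp
  then show ?thesis
    unfolding F_def G_def P0_def B_def .
qed

end
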